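(* Let $X$ be a real Banach space, $A$ a non-empty subset of $X$, and $F_1,F_2$ non-empty closed bounded subsets of $X$ such that $Q_{F_1}(x)=Q_{F_2}(x)$ for each $x\in A$. If $F_1,F_2$ are USUR (respectively SUR, uniquely remotal) on $A$, then $F_1\cup F_2$ is USUR (respectively SUR, uniquely remotal) on $A$.
   Context: $B_X$ is the closed unit ball. For non-empty bounded $F$, $x\in X$, $\delta\ge0$: $r(F,x)=\sup_{y\in F}\|x-y\|$, $Q_F(x,\delta)=\{y\in F:\|x-y\|\ge r(F,x)-\delta\}$, $Q_F(x)=Q_F(x,0)$. On a set $A$, $F$ is: uniquely remotal if $Q_F(x)$ is a singleton for each $x\in A$; SUR if uniquely remotal and for every $x\in A$ and $\epsilon>0$ there is $\delta>0$ with $Q_F(x,\delta)\subseteq Q_F(x)+\epsilon B_X$; USUR if uniquely remotal and for every $\epsilon>0$ there is $\delta>0$ with $Q_F(x,\delta)\subseteq Q_F(x)+\epsilon B_X$ for all $x\in A$. *)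

theory Defs
  imports "HOL-Analysis.Analysis"
begin

definition farthest_radius :: "'a::real_normed_vector set \<Rightarrow> 'a \<Rightarrow> real" where
  "farthest_radius F x = (SUP y\<in>F. norm (x - y))"

definition Qset :: "'a::real_normed_vector set \<Rightarrow> 'a \<Rightarrow> real \<Rightarrow> 'a set" where
  "Qset F x \<delta> = {y \<in> F. norm (x - y) \<ge> farthest_radius F x - \<delta>}"

abbreviation Q0 :: "'a::real_normed_vector set \<Rightarrow> 'a \<Rightarrow> 'a set" where
  "Q0 F x \<equiv> Qset F x 0"

definition enlarge :: "'a::real_normed_vector set \<Rightarrow> real \<Rightarrow> 'a set" where
  "enlarge S \<epsilon> = {s + \<epsilon> *\<^sub>R b | s b. s \<in> S \<and> b \<in> cball 0 1}"

definition uniquely_remotal_on :: "'a::real_normed_vector set \<Rightarrow> 'a set \<Rightarrow> bool" where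
  "uniquely_remotal_on F A \<longleftrightarrow> (\<forall>x\<in>A. \<exists>q. Q0 F x = {q})"

definition SUR_on :: "'a::real_normed_vector set \<Rightarrow> 'a set \<Rightarrow> bool" where
  "SUR_on F A \<longleftrightarrow> uniquely_remotal_on F A \<and>
     (\<forall>x\<in>A. \<forall>\<epsilon>>0. \<exists>\<delta>>0. Qset F x \<delta> \<subseteq> enlarge (Q0 F x) \<epsilon>)"

definition USUR_on :: "'a::real_normed_vector set \<Rightarrow> 'a set \<Rightarrow> bool" where
  "USUR_on F A \<longleftrightarrow> uniquely_remotal_on F A \<and>
     (\<forall>\<epsilon>>0. \<exists>\<delta>>0. \<forall>x\<in>A. Qset F x \<delta> \<subseteq> enlarge (Q0 F x) \<epsilon>)"

end

theory Submission
  imports Defs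
begin

lemma bdd_norm:
  assumes "bounded (F::'a::real_normed_vector set)"
  shows "bdd_above ((\<lambda>y. norm (x - y)) ` F)"
proof -
  obtain a where a: "\<forall>y\<in>F. norm y \<le> a" using assms bounded_iff by blast
  have "\<forall>y\<in>F. norm (x - y) \<le> norm x + a"
    using a by (metis add_left_mono norm_triangle_ineq4 order_trans)
  then show ?thesis by (auto simp: bdd_above_def)
qed

lemma rad_le:
  assumes "bounded F" "y \<in> F"
  shows "norm (x - y) \<le> farthest_radius F x"
  unfolding farthest_radius_def using bdd_norm[OF assms(1)] assms(2) by (rule cSUP_upper2) auto

lemma rad_eq:
  assumes "bounded F" "q \<in> Q0 F x"
  shows "farthest_radius F x = norm (x - q)"
  using assms rad_le[OF assms(1), of q x] unfolding Qset_def by auto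

lemma rad_union:
  assumes "bounded F1" "bounded F2" "q \<in> Q0 F1 x" "q \<in> Q0 F2 x"
  shows "farthest_radius (F1 \<union> F2) x = norm (x - q)"
proof (rule antisym)
  have r1: "farthest_radius F1 x = norm (x - q)" using rad_eq assms by blast
  have r2: "farthest_radius F2 x = norm (x - q)" using rad_eq assms by blast
  have "q \<in> F1" using assms(3) unfolding Qset_def by auto
  show "norm (x - q) \<le> farthest_radius (F1 \<union> F2) x"
    using rad_le[of "F1 \<union> F2" q x] assms \<open>q \<in> F1\<close> by auto
  show "farthest_radius (F1 \<union> F2) x \<le> norm (x - q)"
    unfolding farthest_radius_def
  proof (rule cSUP_least)
    show "F1 \<union> F2 \<noteq> {}" using \<open>q \<in> F1\<close> by auto
    fix y assume "y \<in> F1 \<union> F2"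
    then show "norm (x - y) \<le> norm (x - q)"
      using rad_le[OF assms(1), of y x] rad_le[OF assms(2), of y x] r1 r2 by auto
  qed
qed

lemma Qset_union:
  assumes "bounded F1" "bounded F2" "Q0 F1 x = {q}" "Q0 F2 x = {q}"
  shows "Qset (F1 \<union> F2) x d = Qset F1 x d \<union> Qset F2 x d"
proof -
  have "farthest_radius (F1 \<union> F2) x = norm (x - q)"
    using rad_union[OF assms(1,2)] assms(3,4) by auto
  moreover have "farthest_radius F1 x = norm (x - q)" using rad_eq[OF assms(1)] assms(3) by auto
  moreover have "farthest_radius F2 x = norm (x - q)" using rad_eq[OF assms(2)] assms(4) by auto
  ultimately show ?thesis unfolding Qset_def by auto
qed

lemma Qset_mono:
  "d \<le> d' \<Longrightarrow> Qset F x d \<subseteq> Qset F x d'"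
  unfolding Qset_def by auto

theorem corollary2p11:
  fixes A F1 F2 :: "'a::banach set"
  assumes "A \<noteq> {}"
    and "F1 \<noteq> {}" "closed F1" "bounded F1"
    and "F2 \<noteq> {}" "closed F2" "bounded F2"
    and "\<forall>x\<in>A. Q0 F1 x = Q0 F2 x"
  shows "(USUR_on F1 A \<and> USUR_on F2 A \<longrightarrow> USUR_on (F1 \<union> F2) A)
       \<and> (SUR_on F1 A \<and> SUR_on F2 A \<longrightarrow> SUR_on (F1 \<union> F2) A)
       \<and> (uniquely_remotal_on F1 A \<and> uniquely_remotal_on F2 A \<longrightarrow>
            uniquely_remotal_on (F1 \<union> F2) A)"
proof -
  have key: "Qset (F1 \<union> F2) x d = Qset F1 x d \<union> Qset F2 x d \<and> Q0 (F1 \<union> F2) x = Q0 F1 x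
       \<and> Q0 F2 x = Q0 F1 x"
    if ur: "uniquely_remotal_on F1 A" "x \<in> A" for x d
  proof -
    obtain q where q: "Q0 F1 x = {q}" using ur unfolding uniquely_remotal_on_def by blast
    have q2: "Q0 F2 x = {q}" using q assms(8) ur(2) by auto
    show ?thesis using Qset_union[OF assms(4,7) q q2, of d] Qset_union[OF assms(4,7) q q2, of 0] q q2
      by simp
  qed
  have UR: "uniquely_remotal_on (F1 \<union> F2) A" if "uniquely_remotal_on F1 A"
    unfolding uniquely_remotal_on_def
  proof
    fix x assume x: "x \<in> A"
    have "Q0 (F1 \<union> F2) x = Q0 F1 x" using key[OF that x] by blast
    then show "\<exists>q. Q0 (F1 \<union> F2) x = {q}" using that x unfolding uniquely_remotal_on_def by simp
  qed
  have S: "SUR_on (F1 \<union> F2) A" if "SUR_on F1 A" "SUR_on F2 A"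
  proof -
    have u: "uniquely_remotal_on F1 A" using that(1) unfolding SUR_on_def by (rule conjunct1)
    show ?thesis unfolding SUR_on_def
    proof (intro conjI ballI allI impI)
      show "uniquely_remotal_on (F1 \<union> F2) A" using UR u .
      fix x :: 'a and e :: real assume x: "x \<in> A" and e: "e > 0"
      have "\<exists>d>0. Qset F1 x d \<subseteq> enlarge (Q0 F1 x) e"
        using that(1) x e unfolding SUR_on_def by (elim conjE) (drule bspec, assumption, simp)
      then obtain d1 where d1: "d1 > 0" "Qset F1 x d1 \<subseteq> enlarge (Q0 F1 x) e"
        by (elim exE conjE)
      have "\<exists>d>0. Qset F2 x d \<subseteq> enlarge (Q0 F2 x) e"
        using that(2) x e unfolding SUR_on_def by (elim conjE) (drule bspec, assumption, simp)
      then obtain d2 where d2: "d2 > 0" "Qset F2 x d2 \<subseteq> enlarge (Q0 F2 x) e"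
        by (elim exE conjE)
      note kk = key[OF u x, of "min d1 d2"]
      note k = kk[THEN conjunct1] kk[THEN conjunct2, THEN conjunct1] kk[THEN conjunct2, THEN conjunct2]
      have "Qset F1 x (min d1 d2) \<subseteq> enlarge (Q0 F1 x) e"
        using d1(2) Qset_mono[of "min d1 d2" d1 F1 x, OF min.cobounded1] by (rule subset_trans[rotated])
      moreover have "Qset F2 x (min d1 d2) \<subseteq> enlarge (Q0 F1 x) e"
        using d2(2) Qset_mono[of "min d1 d2" d2 F2 x, OF min.cobounded2] unfolding k(3) by (rule subset_trans[rotated])
      ultimately have "Qset (F1 \<union> F2) x (min d1 d2) \<subseteq> enlarge (Q0 (F1 \<union> F2) x) e"
        unfolding k(1) k(2) by (rule Un_least)
      then show "\<exists>d>0. Qset (F1 \<union> F2) x d \<subseteq> enlarge (Q0 (F1 \<union> F2) x) e"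
        using d1(1) d2(1) by (intro exI[of _ "min d1 d2"] conjI) simp_all
    qed
  qed
  have U: "USUR_on (F1 \<union> F2) A" if "USUR_on F1 A" "USUR_on F2 A"
  proof -
    have u: "uniquely_remotal_on F1 A" using that(1) unfolding USUR_on_def by (rule conjunct1)
    show ?thesis unfolding USUR_on_def
    proof (intro conjI allI impI)
      show "uniquely_remotal_on (F1 \<union> F2) A" using UR u .
      fix e :: real assume e: "e > 0"
      have "\<exists>d>0. \<forall>x\<in>A. Qset F1 x d \<subseteq> enlarge (Q0 F1 x) e"
        using that(1) e unfolding USUR_on_def by simp
      then obtain d1 where d1: "d1 > 0" "\<forall>x\<in>A. Qset F1 x d1 \<subseteq> enlarge (Q0 F1 x) e"
        by (elim exE conjE)
      have "\<exists>d>0. \<forall>x\<in>A. Qset F2 x d \<subseteq> enlarge (Q0 F2 x) e"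
        using that(2) e unfolding USUR_on_def by simp
      then obtain d2 where d2: "d2 > 0" "\<forall>x\<in>A. Qset F2 x d2 \<subseteq> enlarge (Q0 F2 x) e"
        by (elim exE conjE)
      have "\<forall>x\<in>A. Qset (F1 \<union> F2) x (min d1 d2) \<subseteq> enlarge (Q0 (F1 \<union> F2) x) e"
      proof
        fix x assume x: "x \<in> A"
        show "Qset (F1 \<union> F2) x (min d1 d2) \<subseteq> enlarge (Q0 (F1 \<union> F2) x) e"
        proof -
      note kk = key[OF u x, of "min d1 d2"]
      note k = kk[THEN conjunct1] kk[THEN conjunct2, THEN conjunct1] kk[THEN conjunct2, THEN conjunct2]
      have "Qset F1 x (min d1 d2) \<subseteq> enlarge (Q0 F1 x) e"
        using bspec[OF d1(2) x] Qset_mono[of "min d1 d2" d1 F1 x, OF min.cobounded1] by (rule subset_trans[rotated])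
      moreover have "Qset F2 x (min d1 d2) \<subseteq> enlarge (Q0 F1 x) e"
        using bspec[OF d2(2) x] Qset_mono[of "min d1 d2" d2 F2 x, OF min.cobounded2] unfolding k(3) by (rule subset_trans[rotated])
      ultimately show ?thesis
        unfolding k(1) k(2) by (rule Un_least)
        qed
      qed
      then show "\<exists>d>0. \<forall>x\<in>A. Qset (F1 \<union> F2) x d \<subseteq> enlarge (Q0 (F1 \<union> F2) x) e"
        using d1(1) d2(1) by (intro exI[of _ "min d1 d2"] conjI) simp_all
    qed
  qed
  show ?thesis using UR S U unfolding USUR_on_def SUR_on_def by blast
qed

end
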